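(* Let $A$ be a real matrix with $m$ rows, and let $S, T$ be finite sets of unit vectors in $\mathbb{R}^m$ with $S$ nonempty, $f_A(S) \ge f_A(T)$ and $f_A(S) > 0$. Then there exists $v \in S$ such that $$f_A(T \cup \{v\}) - f_A(T) \ge \sigma_{\min}(S)\, \frac{\big(f_A(S) - f_A(T)\big)^2}{4|S|\, f_A(S)}.$$
   Context: For a finite set $V$ of vectors in $\mathbb{R}^m$, $\Pi_V$ denotes the orthogonal projector onto $\mathrm{span}(V)$, and for a matrix $M$ with $m$ rows, $f_M(V) = \|\Pi_V M\|_F^2$. For a finite set $V$ of unit vectors, $\sigma_{\min}(V)$ is the smallest squared singular value of the matrix with columns $V$, i.e. $\inf_{\|x\|_2 = 1} \|Mx\|_2^2$ for that matrix $M$. *)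

theory Defs
  imports "HOL-Analysis.Analysis"
begin

definition proj_span :: "('a::euclidean_space) set \<Rightarrow> 'a \<Rightarrow> 'a" where
  "proj_span V x = (THE p. p \<in> span V \<and> (\<forall>w\<in>span V. (x - p) \<bullet> w = 0))"

definition proj_matrix :: "(real^'m) set \<Rightarrow> real^'m^'m" where
  "proj_matrix V = matrix (proj_span V)"

definition frob_sq :: "real^'n^'m \<Rightarrow> real" where
  "frob_sq M = (\<Sum>i\<in>UNIV. \<Sum>j\<in>UNIV. (M $ i $ j)^2)"

definition f_mat :: "real^'n^'m \<Rightarrow> (real^'m) set \<Rightarrow> real" where
  "f_mat M V = frob_sq (proj_matrix V ** M)"

text \<open>Smallest squared singular value of the matrix whose columns are the
  vectors of V (columns indexed by V itself): inf over unit x of ||M x||^2.\<close>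
definition sigma_min :: "(real^'m) set \<Rightarrow> real" where
  "sigma_min V = Inf {(norm (\<Sum>v\<in>V. x v *\<^sub>R v))^2 | x. (\<Sum>v\<in>V. (x v)^2) = 1}"

end

theory Submission
  imports Defs
begin


lemma proj_char:
  fixes V :: "'a::euclidean_space set"
  shows "proj_span V x \<in> span V \<and> (\<forall>w\<in>span V. (x - proj_span V x) \<bullet> w = 0)"
proof -
  obtain y z where y: "y \<in> span V" and z: "\<And>w. w \<in> span V \<Longrightarrow> orthogonal z w"
    and xyz: "x = y + z" using orthogonal_subspace_decomp_exists[of V x] by blast
  have ex: "y \<in> span V \<and> (\<forall>w\<in>span V. (x - y) \<bullet> w = 0)"
    using y z xyz by (simp add: orthogonal_def)
  have uniq: "p = y" if p: "p \<in> span V \<and> (\<forall>w\<in>span V. (x - p) \<bullet> w = 0)" for p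
  proof -
    have pm: "p - y \<in> span V" using p y by (intro span_diff) auto
    have "(x - y) \<bullet> (p - y) = 0" "(x - p) \<bullet> (p - y) = 0" using ex p pm by auto
    then have "(p - y) \<bullet> (p - y) = 0" by (simp add: inner_diff_left)
    then show ?thesis by simp
  qed
  show ?thesis unfolding proj_span_def
    by (rule theI[where P="\<lambda>p. p \<in> span V \<and> (\<forall>w\<in>span V. (x - p) \<bullet> w = 0)", OF ex uniq])
qed

lemma proj_in: "proj_span V (x::'a::euclidean_space) \<in> span V"
  using proj_char by blast

lemma proj_orth: "w \<in> span V \<Longrightarrow> (x - proj_span V (x::'a::euclidean_space)) \<bullet> w = 0"
  using proj_char by blast

lemma proj_eqI:
  fixes x :: "'a::euclidean_space"
  assumes p: "p \<in> span V" and o: "\<And>w. w \<in> span V \<Longrightarrow> (x - p) \<bullet> w = 0"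
  shows "proj_span V x = p"
proof -
  let ?q = "proj_span V x"
  have pm: "?q - p \<in> span V" by (intro span_diff p proj_in)
  have "(x - ?q) \<bullet> (?q - p) = 0" "(x - p) \<bullet> (?q - p) = 0" using proj_orth o pm by auto
  then have "(?q - p) \<bullet> (?q - p) = 0" by (simp add: inner_diff_left)
  then show ?thesis by simp
qed

lemma proj_linear: "linear (proj_span (V::'a::euclidean_space set))"
proof (rule linearI)
  fix x y :: 'a
  show "proj_span V (x + y) = proj_span V x + proj_span V y"
  proof (rule proj_eqI)
    show "proj_span V x + proj_span V y \<in> span V" by (intro span_add proj_in)
    fix w assume w: "w \<in> span V"
    have "(x - proj_span V x) \<bullet> w = 0" "(y - proj_span V y) \<bullet> w = 0"
      using proj_orth[OF w] by auto
    moreover have "(x + y - (proj_span V x + proj_span V y)) = (x - proj_span V x) + (y - proj_span V y)"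
      by simp
    ultimately show "(x + y - (proj_span V x + proj_span V y)) \<bullet> w = 0"
      by (simp only: inner_add_left)
  qed
next
  fix c :: real and x :: 'a
  show "proj_span V (c *\<^sub>R x) = c *\<^sub>R proj_span V x"
  proof (rule proj_eqI)
    show "c *\<^sub>R proj_span V x \<in> span V" by (simp add: span_mul proj_in)
    fix w assume "w \<in> span V"
    then have "(x - proj_span V x) \<bullet> w = 0" by (rule proj_orth)
    then have "c * ((x - proj_span V x) \<bullet> w) = 0" by simp
    then show "(c *\<^sub>R x - c *\<^sub>R proj_span V x) \<bullet> w = 0"
      by (simp add: algebra_simps inner_diff_left)
  qed
qed

lemma proj_inner: "proj_span V x \<bullet> (x::'a::euclidean_space) = (norm (proj_span V x))^2"
proof -
  have "(x - proj_span V x) \<bullet> proj_span V x = 0" by (rule proj_orth[OF proj_in])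
  then have "x \<bullet> proj_span V x - proj_span V x \<bullet> proj_span V x = 0" by (simp only: inner_diff_left)
  then show ?thesis by (simp only: inner_commute[of x] power2_norm_eq_inner)
qed

lemma proj_sym: "proj_span V x \<bullet> (y::'a::euclidean_space) = proj_span V x \<bullet> proj_span V y"
proof -
  have "(y - proj_span V y) \<bullet> proj_span V x = 0" by (rule proj_orth[OF proj_in])
  then have "y \<bullet> proj_span V x - proj_span V y \<bullet> proj_span V x = 0" by (simp only: inner_diff_left)
  then show ?thesis by (simp only: inner_commute[of y] inner_commute[of "proj_span V y"])
qed

lemma proj_pyth: "(norm (x::'a::euclidean_space))^2 = (norm (proj_span V x))^2 + (norm (x - proj_span V x))^2"
proof -
  have 1: "(x - proj_span V x) \<bullet> proj_span V x = 0" by (rule proj_orth[OF proj_in])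
  have 2: "(x - proj_span V x) \<bullet> proj_span V x = ((norm ((x - proj_span V x) + proj_span V x))^2
     - (norm (x - proj_span V x))^2 - (norm (proj_span V x))^2) / 2" by (rule dot_norm)
  have 3: "(x - proj_span V x) + proj_span V x = x" by simp
  have "((norm x)^2 - (norm (x - proj_span V x))^2 - (norm (proj_span V x))^2) / 2 = 0"
    using 1 2 unfolding 3 by simp
  then show ?thesis by simp
qed

lemma proj_best:
  assumes "z \<in> span V"
  shows "(norm ((x::'a::euclidean_space) - proj_span V x))^2 \<le> (norm (x - z))^2"
proof -
  have d: "proj_span V x - z \<in> span V" by (intro span_diff assms proj_in)
  have o: "(x - proj_span V x) \<bullet> (proj_span V x - z) = 0" by (rule proj_orth[OF d])
  have 2: "(x - proj_span V x) \<bullet> (proj_span V x - z) = ((norm ((x - proj_span V x) + (proj_span V x - z)))^2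
     - (norm (x - proj_span V x))^2 - (norm (proj_span V x - z))^2) / 2" by (rule dot_norm)
  have 3: "(x - proj_span V x) + (proj_span V x - z) = x - z" by simp
  have "(norm (x - z))^2 = (norm (x - proj_span V x))^2 + (norm (proj_span V x - z))^2"
  proof -
    have "((norm (x - z))^2 - (norm (x - proj_span V x))^2 - (norm (proj_span V x - z))^2) / 2 = 0"
      using o 2 unfolding 3 by simp
    then show ?thesis by simp
  qed
  then show ?thesis by simp
qed



lemma f_mat_cols:
  fixes A :: "real^'n^'m"
  shows "f_mat A V = (\<Sum>j\<in>UNIV. (norm (proj_span V (column j A)))^2)"
proof -
  have lin: "linear (proj_span V)" by (rule proj_linear)
  have e: "(proj_matrix V ** A) $ i $ j = proj_span V (column j A) $ i" for i j
  proof -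
    have "(proj_matrix V ** A) $ i $ j = (proj_matrix V *v column j A) $ i"
      by (simp add: matrix_matrix_mult_def matrix_vector_mult_def column_def)
    also have "proj_matrix V *v column j A = proj_span V (column j A)"
      unfolding proj_matrix_def using matrix_vector_mul(2)[OF lin] by metis
    finally show ?thesis .
  qed
  have n: "(norm (v::real^'m))^2 = (\<Sum>i\<in>UNIV. (v $ i)^2)" for v
    unfolding power2_norm_eq_inner inner_vec_def by (simp add: power2_eq_square)
  show ?thesis
    unfolding f_mat_def frob_sq_def e n by (rule sum.swap)
qed



lemma col_C1:
  fixes a :: "'a::euclidean_space"
  shows "(norm (proj_span S a))^2 - (norm (proj_span T a))^2
     \<le> 2 * (proj_span S a \<bullet> proj_span S (a - proj_span T a))"
proof -
  let ?s = "proj_span S a" and ?t = "proj_span T a"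
  have 0: "?s \<bullet> a = (norm ?s)^2" by (rule proj_inner)
  have 1: "?s \<bullet> (a - ?t) = ?s \<bullet> a - ?s \<bullet> ?t" by (rule inner_diff_right)
  have 2: "?s \<bullet> ?t = ((norm ?s)^2 + (norm ?t)^2 - (norm (?s - ?t))^2) / 2" by (rule dot_norm_neg)
  have 3: "?s \<bullet> (a - ?t) = ?s \<bullet> proj_span S (a - ?t)" by (rule proj_sym)
  have 4: "0 \<le> (norm (?s - ?t))^2" by (rule zero_le_power2)
  show ?thesis using 0 1 2 3 4 by argo
qed

lemma amgm_inner:
  fixes x y :: "'a::real_inner"
  assumes t: "t > 0"
  shows "2 * (x \<bullet> y) \<le> t * (norm x)^2 + (norm y)^2 / t"
proof -
  have 1: "(t *\<^sub>R x) \<bullet> y = ((norm (t *\<^sub>R x))^2 + (norm y)^2 - (norm (t *\<^sub>R x - y))^2) / 2"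
    by (rule dot_norm_neg)
  have 2: "(t *\<^sub>R x) \<bullet> y = t * (x \<bullet> y)" by (rule inner_scaleR_left)
  have 3: "(norm (t *\<^sub>R x))^2 = t^2 * (norm x)^2" using t by (simp add: power_mult_distrib)
  have 4: "0 \<le> (norm (t *\<^sub>R x - y))^2" by (rule zero_le_power2)
  have "t * (2 * (x \<bullet> y)) \<le> t^2 * (norm x)^2 + (norm y)^2" using 1 2 3 4 t by argo
  also have "\<dots> = t * (t * (norm x)^2 + (norm y)^2 / t)" using t by (simp add: field_simps power2_eq_square)
  finally show ?thesis using t by (simp add: mult_le_cancel_left)
qed



lemma col_C4:
  fixes a v :: "'a::euclidean_space"
  assumes v: "norm v \<le> 1"
  shows "(v \<bullet> (a - proj_span T a))^2
     \<le> (norm (proj_span (T \<union> {v}) a))^2 - (norm (proj_span T a))^2"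
proof -
  let ?U = "T \<union> {v}"
  define e where "e = a - proj_span T a"
  define w where "w = v - proj_span T v"
  define l where "l = e \<bullet> w"
  have sTU: "span T \<subseteq> span ?U" by (rule span_mono) auto
  have vU: "v \<in> span ?U" by (rule span_base) auto
  have wU: "w \<in> span ?U" unfolding w_def using vU sTU proj_in[of T v] by (intro span_diff) auto
  define z where "z = proj_span T a + l *\<^sub>R w"
  have zU: "z \<in> span ?U" unfolding z_def using sTU proj_in[of T a] wU
    by (intro span_add span_mul) auto
  have pU: "(norm (proj_span ?U a))^2 \<ge> (norm a)^2 - (norm (a - z))^2"
    using proj_pyth[of a ?U] proj_best[OF zU, of a] by linarith
  have pT: "(norm (proj_span T a))^2 = (norm a)^2 - (norm e)^2"
    using proj_pyth[of a T] unfolding e_def by linarith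
  have az: "a - z = e - l *\<^sub>R w" unfolding z_def e_def by simp
  have nz: "(norm (a - z))^2 = (norm e)^2 - 2 * l * (e \<bullet> w) + l^2 * (norm w)^2"
  proof -
    have 1: "e \<bullet> (l *\<^sub>R w) = ((norm e)^2 + (norm (l *\<^sub>R w))^2 - (norm (e - l *\<^sub>R w))^2) / 2"
      by (rule dot_norm_neg)
    have 2: "e \<bullet> (l *\<^sub>R w) = l * (e \<bullet> w)" by (rule inner_scaleR_right)
    have 3: "(norm (l *\<^sub>R w))^2 = l^2 * (norm w)^2" by (simp add: power_mult_distrib)
    show ?thesis unfolding az using 1 2 3 by argo
  qed
  have nw: "(norm w)^2 \<le> 1"
  proof -
    have "(norm w)^2 \<le> (norm v)^2" using proj_pyth[of v T] zero_le_power2[of "norm (proj_span T v)"] unfolding w_def by linarith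
    also have "\<dots> \<le> 1" using v by (simp add: power_le_one)
    finally show ?thesis .
  qed
  have lv: "l = v \<bullet> e"
  proof -
    have "e \<bullet> proj_span T v = 0" unfolding e_def by (rule proj_orth[OF proj_in])
    then show ?thesis unfolding l_def w_def by (simp add: inner_diff_right inner_commute)
  qed
  have "l^2 * (norm w)^2 \<le> l^2 * 1" using nw by (intro mult_left_mono) auto
  then have "l^2 \<le> (norm e)^2 - (norm (a - z))^2"
    using nz unfolding l_def[symmetric] by (simp add: power2_eq_square)
  then show ?thesis using pU pT lv e_def by simp
qed




lemma sigma_nonneg:
  assumes "S \<noteq> {}" and fS: "finite S"
  shows "0 \<le> sigma_min (S :: (real^'m) set)"
proof -
  let ?A = "{(norm (\<Sum>v\<in>S. x v *\<^sub>R v))^2 | x. (\<Sum>v\<in>S. (x v)^2) = 1}"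
  obtain v0 where v0: "v0 \<in> S" using assms by blast
  let ?x = "\<lambda>v. if v = v0 then 1 else (0::real)"
  have "(\<Sum>v\<in>S. (?x v)^2) = (\<Sum>v\<in>S. if v = v0 then 1 else 0)"
    by (rule sum.cong) auto
  also have "\<dots> = 1" using v0 fS by (simp add: sum.delta)
  finally have s1: "(\<Sum>v\<in>S. (?x v)^2) = 1" .
  have mem: "(norm (\<Sum>v\<in>S. ?x v *\<^sub>R v))^2 \<in> ?A"
    by (rule CollectI, rule exI[of _ ?x], rule conjI[OF refl s1])
  have ne: "?A \<noteq> {}" using mem by (metis empty_iff)
  have lb: "0 \<le> y" if "y \<in> ?A" for y
  proof -
    from that obtain x where "y = (norm (\<Sum>v\<in>S. x v *\<^sub>R v))^2" by blast
    then show ?thesis by simp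
  qed
  show ?thesis unfolding sigma_min_def by (rule cInf_greatest[OF ne lb])
qed

lemma sigma_bound:
  fixes S :: "(real^'m) set"
  assumes fin: "finite S"
  shows "sigma_min S * (norm (proj_span S e))^2 \<le> (\<Sum>v\<in>S. (v \<bullet> e)^2)"
proof -
  define p where "p = proj_span S e"
  define R where "R = (\<Sum>v\<in>S. (v \<bullet> e)^2)"
  have R0: "0 \<le> R" unfolding R_def by (intro sum_nonneg) auto
  obtain c where pc: "p = (\<Sum>v\<in>S. c v *\<^sub>R v)"
    using span_finite[OF fin] proj_in[of S e] unfolding p_def by auto
  define C where "C = (\<Sum>v\<in>S. (c v)^2)"
  have C0: "0 \<le> C" unfolding C_def by (intro sum_nonneg) auto
  have pe: "p \<bullet> e = (norm p)^2" unfolding p_def by (rule proj_inner)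
  have pe2: "p \<bullet> e = (\<Sum>v\<in>S. c v * (v \<bullet> e))"
    unfolding pc by (simp add: inner_sum_left)
  have CS: "(p \<bullet> e)^2 \<le> C * R"
    unfolding pe2 C_def R_def by (rule Cauchy_Schwarz_ineq_sum)
  show ?thesis
  proof (cases "sigma_min S \<le> 0")
    case True
    then show ?thesis using R0 unfolding R_def[symmetric]
      by (meson mult_nonpos_nonneg order_trans zero_le_power2)
  next
    case False
    then have sp: "sigma_min S > 0" by simp
    show ?thesis
    proof (cases "C = 0")
      case True
      then have "\<forall>v\<in>S. (c v)^2 = 0" unfolding C_def using fin
        by (subst (asm) sum_nonneg_eq_0_iff) auto
      then have "p = 0" unfolding pc by simp
      then show ?thesis using R0 unfolding p_def R_def by simp
    next
      case False
      then have Cp: "C > 0" using C0 by simp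
      define x where "x = (\<lambda>v. c v / sqrt C)"
      have sx: "(\<Sum>v\<in>S. (x v)^2) = 1"
      proof -
        have "(\<Sum>v\<in>S. (x v)^2) = (\<Sum>v\<in>S. (c v)^2 / C)"
          unfolding x_def using Cp by (intro sum.cong) (auto simp: power_divide)
        also have "\<dots> = C / C" unfolding C_def by (rule sum_divide_distrib[symmetric])
        finally show ?thesis using Cp by simp
      qed
      have px: "(\<Sum>v\<in>S. x v *\<^sub>R v) = (1 / sqrt C) *\<^sub>R p"
        unfolding pc x_def scaleR_sum_right by (intro sum.cong) auto
      have "sigma_min S \<le> (norm (\<Sum>v\<in>S. x v *\<^sub>R v))^2"
        unfolding sigma_min_def
      proof (rule cInf_lower)
        show "(norm (\<Sum>v\<in>S. x v *\<^sub>R v))^2 \<in> {(norm (\<Sum>v\<in>S. x v *\<^sub>R v))^2 | x. (\<Sum>v\<in>S. (x v)^2) = 1}"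
          using sx by blast
        show "bdd_below {(norm (\<Sum>v\<in>S. x v *\<^sub>R v))^2 | x. (\<Sum>v\<in>S. (x v)^2) = 1}"
          by (rule bdd_belowI[of _ 0]) auto
      qed
      also have "\<dots> = (norm p)^2 / C" unfolding px using Cp
        by (simp add: power_mult_distrib power_divide)
      finally have sC: "sigma_min S * C \<le> (norm p)^2" using Cp by (simp add: le_divide_eq)
      have "sigma_min S * ((norm p)^2 * (norm p)^2) \<le> sigma_min S * (C * R)"
        using CS sp unfolding pe by (simp add: power2_eq_square)
      also have "\<dots> = (sigma_min S * C) * R" by simp
      also have "\<dots> \<le> (norm p)^2 * R" using sC R0 by (rule mult_right_mono)
      finally have key: "(norm p)^2 * (sigma_min S * (norm p)^2) \<le> (norm p)^2 * R"
        by (simp add: algebra_simps)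
      show ?thesis
      proof (cases "norm p = 0")
        case True then show ?thesis using R0 unfolding p_def R_def by simp
      next
        case False
        then have "(norm p)^2 > 0" by simp
        then have "sigma_min S * (norm p)^2 \<le> R" using key by (simp add: mult_le_cancel_left)
        then show ?thesis unfolding p_def R_def .
      qed
    qed
  qed
qed



theorem lemma1:
  fixes A :: "real^'n^'m" and S T :: "(real^'m) set"
  assumes "finite S" and "finite T" and "S \<noteq> {}"
    and "\<forall>v\<in>S. norm v = 1" and "\<forall>v\<in>T. norm v = 1"
    and "f_mat A S \<ge> f_mat A T" and "f_mat A S > 0"
  shows "\<exists>v\<in>S. f_mat A (T \<union> {v}) - f_mat A T
           \<ge> sigma_min S * (f_mat A S - f_mat A T)^2 / (4 * real (card S) * f_mat A S)"
proof -
  note fS = assms(1) and ne = assms(3) and unit = assms(4)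
  define a where "a = (\<lambda>j. column j A)"
  define e where "e = (\<lambda>j. a j - proj_span T (a j))"
  define F where "F = f_mat A S"
  define D where "D = f_mat A S - f_mat A T"
  define G where "G = (\<Sum>j\<in>UNIV. (norm (proj_span S (e j)))^2)"
  define g where "g = (\<lambda>v. \<Sum>j\<in>UNIV. (v \<bullet> e j)^2)"
  define \<sigma> where "\<sigma> = sigma_min S"
  have Fp: "F > 0" using assms(7) unfolding F_def .
  have D0: "D \<ge> 0" using assms(6) unfolding D_def by simp
  have sig0: "\<sigma> \<ge> 0" unfolding \<sigma>_def by (rule sigma_nonneg[OF ne fS])
  have fcol: "f_mat A V = (\<Sum>j\<in>UNIV. (norm (proj_span V (a j)))^2)" for V
    unfolding a_def by (rule f_mat_cols)
  obtain v0 where v0: "v0 \<in> S" and vmax: "\<And>u. u \<in> S \<Longrightarrow> g u \<le> g v0"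
  proof -
    have "Max (g ` S) \<in> g ` S" using fS ne by (intro Max_in) auto
    then obtain v0 where "v0 \<in> S" "g v0 = Max (g ` S)" by auto
    moreover have "g u \<le> Max (g ` S)" if "u \<in> S" for u using fS that by (intro Max_ge) auto
    ultimately show ?thesis using that by metis
  qed
  have g0: "g v0 \<ge> 0" unfolding g_def by (intro sum_nonneg) auto
  have gain: "g v0 \<le> f_mat A (T \<union> {v0}) - f_mat A T"
  proof -
    have "g v0 \<le> (\<Sum>j\<in>UNIV. (norm (proj_span (T \<union> {v0}) (a j)))^2 - (norm (proj_span T (a j)))^2)"
      unfolding g_def e_def
      by (intro sum_mono col_C4) (use unit v0 in auto)
    also have "\<dots> = f_mat A (T \<union> {v0}) - f_mat A T"
      unfolding fcol by (rule sum_subtractf)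
    finally show ?thesis .
  qed
  have sumg: "(\<Sum>v\<in>S. g v) \<le> real (card S) * g v0"
    using sum_bounded_above[of S g "g v0"] vmax by simp
  have sigG: "\<sigma> * G \<le> (\<Sum>v\<in>S. g v)"
  proof -
    have "\<sigma> * G = (\<Sum>j\<in>UNIV. \<sigma> * (norm (proj_span S (e j)))^2)"
      unfolding G_def by (rule sum_distrib_left)
    also have "\<dots> \<le> (\<Sum>j\<in>UNIV. \<Sum>v\<in>S. (v \<bullet> e j)^2)"
      unfolding \<sigma>_def by (intro sum_mono sigma_bound fS)
    also have "\<dots> = (\<Sum>v\<in>S. g v)" unfolding g_def by (rule sum.swap)
    finally show ?thesis .
  qed
  have DG: "D^2 \<le> 4 * F * G"
  proof (cases "D = 0")
    case True
    have "0 \<le> G" unfolding G_def by (intro sum_nonneg) auto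
    then show ?thesis using True Fp by simp
  next
    case False
    then have Dp: "D > 0" using D0 by simp
    define t where "t = D / (2 * F)"
    have tp: "t > 0" unfolding t_def using Dp Fp by simp
    have "D = (\<Sum>j\<in>UNIV. (norm (proj_span S (a j)))^2 - (norm (proj_span T (a j)))^2)"
      unfolding D_def fcol by (rule sum_subtractf[symmetric])
    also have "\<dots> \<le> (\<Sum>j\<in>UNIV. 2 * (proj_span S (a j) \<bullet> proj_span S (e j)))"
      unfolding e_def by (intro sum_mono col_C1)
    also have "\<dots> \<le> (\<Sum>j\<in>UNIV. t * (norm (proj_span S (a j)))^2 + (norm (proj_span S (e j)))^2 / t)"
      by (intro sum_mono amgm_inner tp)
    also have "\<dots> = t * F + G / t"
      unfolding F_def G_def fcol by (simp add: sum.distrib sum_distrib_left sum_divide_distrib)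
    finally have 1: "D \<le> t * F + G / t" .
    have 2: "t * F = D / 2" unfolding t_def using Fp by simp
    have 3: "G / t = 2 * F * G / D" unfolding t_def using Fp Dp by (simp add: field_simps)
    have "D / 2 \<le> 2 * F * G / D" using 1 2 3 by linarith
    then have "D * (D / 2) \<le> D * (2 * F * G / D)" using Dp by (intro mult_left_mono) auto
    then show ?thesis using Dp by (simp add: field_simps power2_eq_square)
  qed
  have "\<sigma> * D^2 \<le> \<sigma> * (4 * F * G)" using DG sig0 by (rule mult_left_mono)
  also have "\<dots> = 4 * F * (\<sigma> * G)" by simp
  also have "\<dots> \<le> 4 * F * (real (card S) * g v0)"
    using sigG sumg Fp by (intro mult_left_mono) auto
  finally have key: "\<sigma> * D^2 \<le> (4 * real (card S) * F) * g v0" by (simp add: algebra_simps)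
  have cp: "card S > 0" using fS ne by (simp add: card_gt_0_iff)
  have den: "4 * real (card S) * F > 0" using cp Fp by simp
  have "\<sigma> * D^2 / (4 * real (card S) * F) \<le> g v0"
    using key den by (simp add: divide_le_eq mult.commute)
  then show ?thesis using gain v0 unfolding \<sigma>_def D_def F_def by (intro bexI[of _ v0]) auto
qed


end
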